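(* Let $n>1$, $m\ge1$, let $P$ be a pivot path of $v\in Z_{n,m}$ and let $I=[p_1+1,p_2]$ be a $P$-interval. (1) Assume $p_2=m+1$ and $P$ shifts left in $I$. If $\sum_{i=j}^{m+1}v_i\geq0$ for every $j\in I$, then no step of $P$ is a left shift at $m$ applied to a vertex whose entry $m+1$ equals $0$. (2) Assume $p_1=-1$ and $P$ shifts right in $I$. If $\sum_{i=0}^{j}v_i\geq0$ for every $j\in I$, then no step of $P$ is a right shift at $0$ applied to a vertex whose entry $0$ equals $0$.
   Context: Elements of $\mathbb{Z}_n$ are identified with representatives in $\{0,\dots,n-1\}$ (so $v_0,v_{m+1}$ are such integers in sums). $Z_{n,m}$ has vertices $u=(u_0,\dots,u_{m+1})\in\mathbb{Z}_n\times\{-1,0,1\}^m\times\mathbb{Z}_n$ with $\sum u_i\equiv0\pmod n$. A step from $v$ to $u$ is a left shift at $i$ ($0\le i\le m$) if $u_j=v_j$ for $j\notin\{i,i+1\}$, $u_i=v_i+1$, $u_{i+1}=v_{i+1}-1$, and a right shift at $i$ if $u_i=v_i-1$, $u_{i+1}=v_{i+1}+1$ (arithmetic in coordinates $0,m+1$ in $\mathbb{Z}_n$); vertices are adjacent iff related by such a shift. For a path $P$ from $v$ to the all-zero vertex $0$: $0\le p\le m$ is an inner wall if no step is a shift at $p$; $-1$ is a wall if no step is a left shift at $0$; $m+1$ is a wall if no step is a right shift at $m$. A $p$-pivot path of $v$ is a shortest path from $v$ to $0$ among those having $p$ as a wall; a pivot path is a $p$-pivot path for some $p$. If $p_1<\dots<p_t$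 are the inner walls of $P$, $p_0=-1$, $p_{t+1}=m+1$, the $P$-intervals are $[p_k+1,p_{k+1}]$. For a pivot path, all steps that are shifts at $j$ with $[j,j+1]\subseteq I$ go in one direction; $P$ shifts left (right) in $I$ accordingly. *)

theory Defs
  imports Main
begin

text \<open>Vertices of Z_{n,m}: functions u :: nat => int, coordinates 0..m+1, zero outside.
  Coordinates 0 and m+1 are representatives in {0..n-1}, inner coordinates in {-1,0,1}.\<close>

definition zvert :: "nat \<Rightarrow> nat \<Rightarrow> (nat \<Rightarrow> int) \<Rightarrow> bool" where
  "zvert n m u \<longleftrightarrow>
     (\<forall>i. i > m + 1 \<longrightarrow> u i = 0) \<and>
     0 \<le> u 0 \<and> u 0 < int n \<and> 0 \<le> u (m+1) \<and> u (m+1) < int n \<and>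
     (\<forall>i\<in>{1..m}. u i \<in> {-1, 0, 1}) \<and>
     (\<Sum>i\<le>m+1. u i) mod int n = 0"

definition coord_norm :: "nat \<Rightarrow> nat \<Rightarrow> nat \<Rightarrow> int \<Rightarrow> int" where
  "coord_norm n m j x = (if j = 0 \<or> j = m + 1 then x mod int n else x)"

definition lshift :: "nat \<Rightarrow> nat \<Rightarrow> nat \<Rightarrow> (nat \<Rightarrow> int) \<Rightarrow> (nat \<Rightarrow> int) \<Rightarrow> bool" where
  "lshift n m i v u \<longleftrightarrow> i \<le> m \<and>
     (\<forall>j. j \<noteq> i \<and> j \<noteq> i + 1 \<longrightarrow> u j = v j) \<and>
     u i = coord_norm n m i (v i + 1) \<and>
     u (i+1) = coord_norm n m (i+1) (v (i+1) - 1)"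

definition rshift :: "nat \<Rightarrow> nat \<Rightarrow> nat \<Rightarrow> (nat \<Rightarrow> int) \<Rightarrow> (nat \<Rightarrow> int) \<Rightarrow> bool" where
  "rshift n m i v u \<longleftrightarrow> i \<le> m \<and>
     (\<forall>j. j \<noteq> i \<and> j \<noteq> i + 1 \<longrightarrow> u j = v j) \<and>
     u i = coord_norm n m i (v i - 1) \<and>
     u (i+1) = coord_norm n m (i+1) (v (i+1) + 1)"

definition zadj :: "nat \<Rightarrow> nat \<Rightarrow> (nat \<Rightarrow> int) \<Rightarrow> (nat \<Rightarrow> int) \<Rightarrow> bool" where
  "zadj n m v u \<longleftrightarrow> zvert n m v \<and> zvert n m u \<and> (\<exists>i. lshift n m i v u \<or> rshift n m i v u)"

definition zpath :: "nat \<Rightarrow> nat \<Rightarrow> (nat \<Rightarrow> int) list \<Rightarrow> bool" where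
  "zpath n m P \<longleftrightarrow> P \<noteq> [] \<and> (\<forall>x\<in>set P. zvert n m x) \<and>
     (\<forall>k. k + 1 < length P \<longrightarrow> zadj n m (P!k) (P!(k+1)))"

definition zpath_to0 :: "nat \<Rightarrow> nat \<Rightarrow> (nat \<Rightarrow> int) \<Rightarrow> (nat \<Rightarrow> int) list \<Rightarrow> bool" where
  "zpath_to0 n m v P \<longleftrightarrow> zpath n m P \<and> hd P = v \<and> last P = (\<lambda>_. 0)"

definition has_lshift_at :: "nat \<Rightarrow> nat \<Rightarrow> (nat \<Rightarrow> int) list \<Rightarrow> nat \<Rightarrow> bool" where
  "has_lshift_at n m P i \<longleftrightarrow> (\<exists>k. k + 1 < length P \<and> lshift n m i (P!k) (P!(k+1)))"

definition has_rshift_at :: "nat \<Rightarrow> nat \<Rightarrow> (nat \<Rightarrow> int) list \<Rightarrow> nat \<Rightarrow> bool" where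
  "has_rshift_at n m P i \<longleftrightarrow> (\<exists>k. k + 1 < length P \<and> rshift n m i (P!k) (P!(k+1)))"

definition inner_wall :: "nat \<Rightarrow> nat \<Rightarrow> (nat \<Rightarrow> int) list \<Rightarrow> int \<Rightarrow> bool" where
  "inner_wall n m P p \<longleftrightarrow> 0 \<le> p \<and> p \<le> int m \<and>
     \<not> has_lshift_at n m P (nat p) \<and> \<not> has_rshift_at n m P (nat p)"

definition is_wall :: "nat \<Rightarrow> nat \<Rightarrow> (nat \<Rightarrow> int) list \<Rightarrow> int \<Rightarrow> bool" where
  "is_wall n m P p \<longleftrightarrow> inner_wall n m P p \<or>
     (p = -1 \<and> \<not> has_lshift_at n m P 0) \<or>
     (p = int m + 1 \<and> \<not> has_rshift_at n m P m)"

text \<open>p-pivot path: shortest path from v to 0 among those having p as a wall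
  (length = number of steps = length of the vertex list minus one).\<close>
definition p_pivot_path :: "nat \<Rightarrow> nat \<Rightarrow> int \<Rightarrow> (nat \<Rightarrow> int) \<Rightarrow> (nat \<Rightarrow> int) list \<Rightarrow> bool" where
  "p_pivot_path n m p v P \<longleftrightarrow> zpath_to0 n m v P \<and> is_wall n m P p \<and>
     (\<forall>Q. zpath_to0 n m v Q \<and> is_wall n m Q p \<longrightarrow> length P \<le> length Q)"

definition pivot_path :: "nat \<Rightarrow> nat \<Rightarrow> (nat \<Rightarrow> int) \<Rightarrow> (nat \<Rightarrow> int) list \<Rightarrow> bool" where
  "pivot_path n m v P \<longleftrightarrow> (\<exists>p. -1 \<le> p \<and> p \<le> int m + 1 \<and> p_pivot_path n m p v P)"

definition P_interval :: "nat \<Rightarrow> nat \<Rightarrow> (nat \<Rightarrow> int) list \<Rightarrow> int \<Rightarrow> int \<Rightarrow> bool" where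
  "P_interval n m P a b \<longleftrightarrow> -1 \<le> a \<and> a < b \<and> b \<le> int m + 1 \<and>
     (a = -1 \<or> inner_wall n m P a) \<and> (b = int m + 1 \<or> inner_wall n m P b) \<and>
     (\<forall>q. a < q \<and> q < b \<longrightarrow> \<not> inner_wall n m P q)"

definition shifts_left_in :: "nat \<Rightarrow> nat \<Rightarrow> (nat \<Rightarrow> int) list \<Rightarrow> int \<Rightarrow> int \<Rightarrow> bool" where
  "shifts_left_in n m P lo hi \<longleftrightarrow> (\<forall>k j. k + 1 < length P \<and> lo \<le> int j \<and> int j + 1 \<le> hi \<longrightarrow>
      \<not> rshift n m j (P!k) (P!(k+1)))"

definition shifts_right_in :: "nat \<Rightarrow> nat \<Rightarrow> (nat \<Rightarrow> int) list \<Rightarrow> int \<Rightarrow> int \<Rightarrow> bool" where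
  "shifts_right_in n m P lo hi \<longleftrightarrow> (\<forall>k j. k + 1 < length P \<and> lo \<le> int j \<and> int j + 1 \<le> hi \<longrightarrow>
      \<not> lshift n m j (P!k) (P!(k+1)))"

end

theory Submission
  imports Defs
begin

fun steps_ok :: "((nat\<Rightarrow>int) \<Rightarrow> (nat\<Rightarrow>int) \<Rightarrow> bool) \<Rightarrow> (nat\<Rightarrow>int) list \<Rightarrow> bool" where
  "steps_ok R (x#y#r) = (R x y \<and> steps_ok R (y#r))"
| "steps_ok R _ = True"

lemma steps_ok_nth: "steps_ok R P \<longleftrightarrow> (\<forall>k. k+1 < length P \<longrightarrow> R (P!k) (P!(k+1)))"
proof (induction R P rule: steps_ok.induct)
  case (1 R x y r)
  show ?case
  proof
    assume "steps_ok R (x#y#r)"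
    then have a: "R x y" and b: "\<forall>k. k+1 < length (y#r) \<longrightarrow> R ((y#r)!k) ((y#r)!(k+1))" using 1 by auto
    show "\<forall>k. k+1 < length (x#y#r) \<longrightarrow> R ((x#y#r)!k) ((x#y#r)!(k+1))"
    proof (intro allI impI)
      fix k assume "k+1 < length (x#y#r)"
      then show "R ((x#y#r)!k) ((x#y#r)!(k+1))" using a b by (cases k) auto
    qed
  next
    assume h: "\<forall>k. k+1 < length (x#y#r) \<longrightarrow> R ((x#y#r)!k) ((x#y#r)!(k+1))"
    have "R x y" using h[rule_format, of 0] by simp
    moreover have "\<forall>k. k+1 < length (y#r) \<longrightarrow> R ((y#r)!k) ((y#r)!(k+1))"
    proof (intro allI impI)
      fix k assume "k+1 < length (y#r)"
      then show "R ((y#r)!k) ((y#r)!(k+1))" using h[rule_format, of "Suc k"] by simp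
    qed
    ultimately show "steps_ok R (x#y#r)" using 1 by simp
  qed
qed auto

lemma steps_ok_Cons: "Q \<noteq> [] \<Longrightarrow> steps_ok R (x # Q) \<longleftrightarrow> R x (hd Q) \<and> steps_ok R Q"
  by (cases Q) auto

lemma steps_ok_mono: "steps_ok R P \<Longrightarrow> (\<And>x y. R x y \<Longrightarrow> S x y) \<Longrightarrow> steps_ok S P"
  by (induction R P rule: steps_ok.induct) auto

lemma has_lshift_steps: "has_lshift_at n m P i \<longleftrightarrow> \<not> steps_ok (\<lambda>x y. \<not> lshift n m i x y) P"
  unfolding has_lshift_at_def steps_ok_nth by auto

lemma has_rshift_steps: "has_rshift_at n m P i \<longleftrightarrow> \<not> steps_ok (\<lambda>x y. \<not> rshift n m i x y) P"
  unfolding has_rshift_at_def steps_ok_nth by auto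

lemma zpath_steps: "zpath n m P \<longleftrightarrow> P \<noteq> [] \<and> (\<forall>x\<in>set P. zvert n m x) \<and> steps_ok (zadj n m) P"
  unfolding zpath_def steps_ok_nth by auto

lemma coord_norm_inner: "j \<noteq> 0 \<Longrightarrow> j \<noteq> m+1 \<Longrightarrow> coord_norm n m j x = x"
  by (simp add: coord_norm_def)

lemma coord_norm_ex: "\<exists>k. coord_norm n m j x = x + int n * k"
proof (cases "j = 0 \<or> j = m+1")
  case True
  then have "coord_norm n m j x = x + int n * (- (x div int n))"
    by (simp add: coord_norm_def minus_div_mult_eq_mod[symmetric] algebra_simps)
  then show ?thesis by blast
next
  case False
  then show ?thesis by (rule_tac x=0 in exI) (simp add: coord_norm_def)
qed

lemma lshift_unique:
  assumes "lshift n m i x y" "lshift n m i' x y" shows "i = i'"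
proof (rule ccontr)
  assume ne: "i \<noteq> i'"
  have key: "False" if a: "lshift n m a x y" and b: "lshift n m b x y" and lt: "a < b" for a b
  proof -
    have b1: "b \<ge> 1" "b \<le> m" using lt b by (auto simp: lshift_def)
    have yb: "y b = x b + 1" using b b1 by (auto simp: lshift_def coord_norm_def)
    show False
    proof (cases "b = a + 1")
      case True
      then have "y b = x b - 1" using a b1 by (auto simp: lshift_def coord_norm_def)
      then show False using yb by simp
    next
      case False
      then have "y b = x b" using a lt by (auto simp: lshift_def)
      then show False using yb by simp
    qed
  qed
  show False using ne key[OF assms] key[OF assms(2,1)] by linarith
qed

lemma mod_shift_ne:
  fixes z :: int assumes "n > 1" "0 \<le> z" "z < int n"
  shows "(z - 1) mod int n \<noteq> z" "(z + 1) mod int n \<noteq> z"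
proof -
  show "(z - 1) mod int n \<noteq> z"
  proof (cases "z = 0")
    case True
    have "(-1::int) mod int n = int n - 1" using assms(1)
      by (simp add: zmod_minus1)
    then show ?thesis using True assms by simp
  next
    case False
    then have "(z-1) mod int n = z - 1" using assms by simp
    then show ?thesis by simp
  qed
  show "(z + 1) mod int n \<noteq> z"
  proof (cases "z + 1 = int n")
    case True
    then show ?thesis using assms by simp
  next
    case False
    then have "(z+1) mod int n = z + 1" using assms by simp
    then show ?thesis by simp
  qed
qed

lemma lshift_not_rshift_m:
  assumes "lshift n m i x y" "zvert n m x" "n > 1" "m \<ge> 1"
  shows "\<not> rshift n m m x y"
proof
  assume r: "rshift n m m x y"
  have x1: "0 \<le> x (m+1)" "x (m+1) < int n" using assms(2) by (auto simp: zvert_def)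
  have "y (m+1) = (x (m+1) + 1) mod int n" using r by (simp add: rshift_def coord_norm_def)
  then have ne: "y (m+1) \<noteq> x (m+1)" using mod_shift_ne(2)[OF assms(3) x1] by simp
  have L: "i \<le> m" "\<forall>j. j \<noteq> i \<and> j \<noteq> i+1 \<longrightarrow> y j = x j" using assms(1) by (simp_all add: lshift_def)
  have "i = m"
  proof (rule ccontr)
    assume "i \<noteq> m"
    then have "y (m+1) = x (m+1)" using L(2)[rule_format, of "m+1"] L(1) by simp
    then show False using ne by simp
  qed
  then have "y m = x m + 1" using assms(1,4) by (simp add: lshift_def coord_norm_def)
  moreover have "y m = x m - 1" using r assms(4) by (simp add: rshift_def coord_norm_def)
  ultimately show False by simp
qed

lemma sum_one:
  fixes x y :: "nat \<Rightarrow> int"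
  assumes "finite A" "i \<in> A" "\<forall>t. t \<noteq> i \<longrightarrow> y t = x t"
  shows "sum y A = sum x A + (y i - x i)"
proof -
  have "sum y A - sum x A = sum (\<lambda>t. y t - x t) A" by (simp add: sum_subtractf)
  also have "\<dots> = sum (\<lambda>t. y t - x t) {i}"
    by (rule sum.mono_neutral_right) (use assms in auto)
  finally show ?thesis by simp
qed

lemma sum_two:
  fixes x y :: "nat \<Rightarrow> int"
  assumes "finite A" "i \<in> A" "Suc i \<in> A" "\<forall>t. t \<noteq> i \<and> t \<noteq> Suc i \<longrightarrow> y t = x t"
  shows "sum y A = sum x A + (y i - x i) + (y (Suc i) - x (Suc i))"
proof -
  have "sum y A - sum x A = sum (\<lambda>t. y t - x t) A" by (simp add: sum_subtractf)
  also have "\<dots> = sum (\<lambda>t. y t - x t) {i, Suc i}"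
    by (rule sum.mono_neutral_right) (use assms in auto)
  finally show ?thesis by simp
qed

fun cnt :: "nat \<Rightarrow> nat \<Rightarrow> nat \<Rightarrow> (nat\<Rightarrow>int) list \<Rightarrow> nat" where
  "cnt n m i (x#y#r) = (if lshift n m i x y then 1 else 0) + cnt n m i (y#r)"
| "cnt n m i _ = 0"

fun wr :: "nat \<Rightarrow> nat \<Rightarrow> (nat\<Rightarrow>int) list \<Rightarrow> nat" where
  "wr n m (x#y#r) = (if lshift n m m x y \<and> x (m+1) = 0 then 1 else 0) + wr n m (y#r)"
| "wr n m _ = 0"

lemma wr_zero: "wr n m P = 0 \<longleftrightarrow> steps_ok (\<lambda>x y. \<not> (lshift n m m x y \<and> x (m+1) = 0)) P"
  by (induction n m P rule: wr.induct) auto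

lemma wr_pos:
  assumes "\<exists>k. k + 1 < length P \<and> lshift n m m (P!k) (P!(k+1)) \<and> (P!k) (m+1) = 0"
  shows "wr n m P > 0"
  using assms wr_zero[of n m P] unfolding steps_ok_nth by auto

lemma lshift_vals:
  assumes "lshift n m i x y"
  shows "i \<le> m" "\<And>t. t \<noteq> i \<Longrightarrow> t \<noteq> Suc i \<Longrightarrow> y t = x t"
    "y i = coord_norm n m i (x i + 1)" "y (Suc i) = coord_norm n m (Suc i) (x (Suc i) - 1)"
  using assms by (simp_all add: lshift_def)

lemma rshift_vals:
  assumes "rshift n m i x y"
  shows "i \<le> m" "\<And>t. t \<noteq> i \<Longrightarrow> t \<noteq> Suc i \<Longrightarrow> y t = x t"
    "y i = coord_norm n m i (x i - 1)" "y (Suc i) = coord_norm n m (Suc i) (x (Suc i) + 1)"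
  using assms by (simp_all add: rshift_def)

lemma lshift_m_changes:
  assumes "lshift n m m x y" "zvert n m x" "n > 1"
  shows "y (m+1) \<noteq> x (m+1)"
proof -
  have x1: "0 \<le> x (m+1)" "x (m+1) < int n" using assms(2) by (auto simp: zvert_def)
  have "y (m+1) = (x (m+1) - 1) mod int n" using lshift_vals(4)[OF assms(1)] by (simp add: coord_norm_def)
  then show ?thesis using mod_shift_ne(1)[OF assms(3) x1] by simp
qed

lemma step_easy:
  assumes "zvert n m x" "zvert n m y" "lshift n m i x y \<or> rshift n m i x y"
    "i \<noteq> j - 1" "rshift n m i x y \<Longrightarrow> i < j" "1 \<le> j" "j \<le> m+1" "n > 1"
  shows "(\<Sum>t=j..m+1. y t) = (\<Sum>t=j..m+1. x t) + (if lshift n m m x y \<and> x (m+1) = 0 then int n else 0)"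
proof (cases "i < j")
  case True
  then have lt: "Suc i < j" using assms(4) by linarith
  have eq: "\<forall>t\<in>{j..m+1}. y t = x t"
  proof
    fix t assume "t \<in> {j..m+1}"
    then have "t \<noteq> i" "t \<noteq> Suc i" using lt by auto
    then show "y t = x t" using assms(3) lshift_vals(2) rshift_vals(2) by metis
  qed
  then have s: "(\<Sum>t=j..m+1. y t) = (\<Sum>t=j..m+1. x t)" using eq by (intro sum.cong) auto
  have "y (m+1) = x (m+1)" using eq assms(7) by simp
  then have "\<not> lshift n m m x y" using lshift_m_changes assms by blast
  then show ?thesis using s by simp
next
  case False
  then have ij: "j \<le> i" by simp
  then have l: "lshift n m i x y" using assms(3,5) by auto
  have im: "i \<le> m" using lshift_vals(1)[OF l] .
  have s: "(\<Sum>t=j..m+1. y t) = (\<Sum>t=j..m+1. x t) + (y i - x i) + (y (Suc i) - x (Suc i))"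
    by (rule sum_two) (use ij im lshift_vals(2)[OF l] in auto)
  have yi: "y i = x i + 1" using lshift_vals(3)[OF l] ij assms(6) im by (simp add: coord_norm_def)
  show ?thesis
  proof (cases "i = m")
    case False
    then have "y (Suc i) = x (Suc i) - 1" using lshift_vals(4)[OF l] im by (simp add: coord_norm_def)
    moreover have "\<not> lshift n m m x y" using lshift_unique[OF l] False by blast
    ultimately show ?thesis using s yi by simp
  next
    case True
    have x1: "0 \<le> x (m+1)" "x (m+1) < int n" using assms(1) by (auto simp: zvert_def)
    have ys: "y (Suc i) = (x (m+1) - 1) mod int n" using lshift_vals(4)[OF l] True by (simp add: coord_norm_def)
    show ?thesis
    proof (cases "x (m+1) = 0")
      case True
      have "(-1::int) mod int n = int n - 1" using assms(8) by (simp add: zmod_minus1)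
      then show ?thesis using s yi ys True l \<open>i = m\<close> by simp
    next
      case False
      then have "y (Suc i) = x (m+1) - 1" using ys x1 by simp
      then show ?thesis using s yi False l \<open>i = m\<close> by simp
    qed
  qed
qed

lemma easy:
  assumes "steps_ok (\<lambda>x y. zadj n m x y \<and> \<not> lshift n m (j-1) x y \<and> \<not> rshift n m (j-1) x y
             \<and> (\<forall>i. j \<le> i \<longrightarrow> \<not> rshift n m i x y)) P"
    "P \<noteq> []" "last P = (\<lambda>_. 0)" "1 \<le> j" "j \<le> m+1" "n > 1"
  shows "(\<Sum>t=j..m+1. hd P t) + int n * int (wr n m P) = 0"
  using assms
proof (induction n m P rule: wr.induct)
  case (1 n m x y r)
  have IH: "(\<Sum>t=j..m+1. y t) + int n * int (wr n m (y#r)) = 0" using 1 by simp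
  have st: "zadj n m x y" "\<not> lshift n m (j-1) x y" "\<not> rshift n m (j-1) x y"
     "\<forall>i. j \<le> i \<longrightarrow> \<not> rshift n m i x y" using 1(2) by auto
  obtain i where i: "lshift n m i x y \<or> rshift n m i x y" using st(1) by (auto simp: zadj_def)
  have zx: "zvert n m x" "zvert n m y" using st(1) by (auto simp: zadj_def)
  have "i \<noteq> j - 1" using i st by auto
  moreover have "rshift n m i x y \<Longrightarrow> i < j" using st(4) by (meson not_le)
  ultimately have "(\<Sum>t=j..m+1. y t) = (\<Sum>t=j..m+1. x t) + (if lshift n m m x y \<and> x (m+1) = 0 then int n else 0)"
    using step_easy[OF zx i] 1 by blast
  then show ?case using IH by (auto simp: algebra_simps)
qed auto

lemma inner_change:
  assumes "lshift n m i0 x y" "1 \<le> i" "i \<le> m"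
  shows "y i = x i + (if i = i0 then 1 else 0) - (if i = Suc i0 then 1 else 0)"
proof -
  have "i \<noteq> 0" "i \<noteq> m+1" using assms by auto
  then show ?thesis
    using lshift_vals[OF assms(1)] coord_norm_inner[of i m n] by (cases "i = i0"; cases "i = Suc i0") auto
qed

lemma lshift_iff_eq: "lshift n m i0 x y \<Longrightarrow> lshift n m i x y \<longleftrightarrow> i = i0"
  using lshift_unique by blast

definition lstep :: "nat \<Rightarrow> nat \<Rightarrow> (nat\<Rightarrow>int) \<Rightarrow> (nat\<Rightarrow>int) \<Rightarrow> bool" where
  "lstep n m x y \<longleftrightarrow> zvert n m x \<and> zvert n m y \<and> (\<exists>i\<le>m. lshift n m i x y)"

lemma counting:
  assumes "steps_ok (lstep n m) P" "P \<noteq> []" "last P = (\<lambda>_. 0)" "n > 1"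
  shows "(\<forall>i. 1 \<le> i \<and> i \<le> m \<longrightarrow> int (cnt n m i P) - int (cnt n m (i-1) P) = - hd P i)
    \<and> int (cnt n m m P) = hd P (m+1) + int n * int (wr n m P)
    \<and> (int (cnt n m 0 P) + hd P 0) mod int n = 0
    \<and> length P = (\<Sum>i\<le>m. cnt n m i P) + 1"
  using assms
proof (induction n m P rule: wr.induct)
  case (1 n m x y r)
  let ?c = "\<lambda>i. cnt n m i (y#r)"
  have IH1: "\<forall>i. 1 \<le> i \<and> i \<le> m \<longrightarrow> int (?c i) - int (?c (i-1)) = - y i"
   and IH2: "int (?c m) = y (m+1) + int n * int (wr n m (y#r))"
   and IH3: "(int (?c 0) + y 0) mod int n = 0"
   and IH4: "length (y#r) = (\<Sum>i\<le>m. ?c i) + 1" using 1 by auto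
  have st: "zvert n m x" "zvert n m y" "\<exists>i\<le>m. lshift n m i x y" using 1(2) by (auto simp: lstep_def)
  then obtain i0 where i0: "i0 \<le> m" "lshift n m i0 x y" by blast
  have ce: "cnt n m i (x#y#r) = (if i = i0 then 1 else 0) + ?c i" for i
    using lshift_iff_eq[OF i0(2)] by simp
  have A: "\<forall>i. 1 \<le> i \<and> i \<le> m \<longrightarrow> int (cnt n m i (x#y#r)) - int (cnt n m (i-1) (x#y#r)) = - x i"
  proof (intro allI impI)
    fix i assume h: "1 \<le> i \<and> i \<le> m"
    have "y i = x i + (if i = i0 then 1 else 0) - (if i = Suc i0 then 1 else 0)"
      using inner_change[OF i0(2)] h by blast
    moreover have "(i - 1 = i0) = (i = Suc i0)" using h by auto
    ultimately show "int (cnt n m i (x#y#r)) - int (cnt n m (i-1) (x#y#r)) = - x i"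
      using IH1 h unfolding ce by (auto split: if_splits)
  qed
  have x1: "0 \<le> x (m+1)" "x (m+1) < int n" "0 \<le> x 0" "x 0 < int n" using st(1) by (auto simp: zvert_def)
  have B: "int (cnt n m m (x#y#r)) = x (m+1) + int n * int (wr n m (x#y#r))"
  proof (cases "i0 = m")
    case True
    have ys: "y (m+1) = (x (m+1) - 1) mod int n" using lshift_vals(4)[OF i0(2)] True by (simp add: coord_norm_def)
    show ?thesis
    proof (cases "x (m+1) = 0")
      case True
      have "(-1::int) mod int n = int n - 1" using 1 by (simp add: zmod_minus1)
      then show ?thesis using ys True IH2 i0 \<open>i0 = m\<close> ce[of m] by (simp add: algebra_simps)
    next
      case False
      then have "y (m+1) = x (m+1) - 1" using ys x1 by simp
      then show ?thesis using False IH2 i0 \<open>i0 = m\<close> ce[of m] by (simp add: algebra_simps)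
    qed
  next
    case False
    have "y (m+1) = x (m+1)" using lshift_vals(2)[OF i0(2), of "m+1"] False i0(1) by simp
    moreover have "\<not> lshift n m m x y" using lshift_iff_eq[OF i0(2)] False by simp
    ultimately show ?thesis using IH2 ce[of m] False by simp
  qed
  have C: "(int (cnt n m 0 (x#y#r)) + x 0) mod int n = 0"
  proof (cases "i0 = 0")
    case True
    have y0: "y 0 = (x 0 + 1) mod int n" using lshift_vals(3)[OF i0(2)] True by (simp add: coord_norm_def)
    have "(int (cnt n m 0 (x#y#r)) + x 0) mod int n = (int (?c 0) + (x 0 + 1)) mod int n"
      using ce[of 0] True by (simp add: algebra_simps)
    also have "\<dots> = (int (?c 0) + (x 0 + 1) mod int n) mod int n" by (simp add: mod_add_right_eq)
    also have "\<dots> = 0" using IH3 y0 by simp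
    finally show ?thesis .
  next
    case False
    have "y 0 = x 0" using lshift_vals(2)[OF i0(2), of 0] False by simp
    then show ?thesis using IH3 ce[of 0] False by simp
  qed
  have D: "length (x#y#r) = (\<Sum>i\<le>m. cnt n m i (x#y#r)) + 1"
  proof -
    have "(\<Sum>i\<le>m. cnt n m i (x#y#r)) = (\<Sum>i\<le>m. (if i = i0 then 1 else 0)) + (\<Sum>i\<le>m. ?c i)"
      unfolding ce by (simp add: sum.distrib)
    also have "(\<Sum>i\<le>m. (if i = i0 then 1::nat else 0)) = 1" using i0(1) by simp
    finally show ?thesis using IH4 by simp
  qed
  show ?case using A B C D by simp
qed auto

lemma rshift_m_not:
  assumes "(z::int) \<ge> 0" "z < int n" "n > 1"
  shows "(z + 1) mod int n \<noteq> z" using mod_shift_ne(2)[OF assms(3) assms(1,2)] .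

lemma construct:
  assumes "n > 1" "m \<ge> 1"
  shows "\<And>u a. zvert n m u \<Longrightarrow> (\<forall>i\<le>m. 0 \<le> a i) \<Longrightarrow> (\<forall>i. 1 \<le> i \<and> i \<le> m \<longrightarrow> a i - a (i-1) = - u i)
     \<Longrightarrow> (a 0 + u 0) mod int n = 0 \<Longrightarrow> (u (m+1) - a m) mod int n = 0 \<Longrightarrow> (\<Sum>i\<le>m. a i) = int N
     \<Longrightarrow> \<exists>Q. zpath_to0 n m u Q \<and> length Q = N + 1 \<and> \<not> has_rshift_at n m Q m"
proof (induction N)
  case 0
  fix u :: "nat \<Rightarrow> int" and a :: "nat \<Rightarrow> int"
  assume zu: "zvert n m u" and an: "\<forall>i\<le>m. 0 \<le> a i"
    and eqs: "\<forall>i. 1 \<le> i \<and> i \<le> m \<longrightarrow> a i - a (i-1) = - u i"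
    and c0: "(a 0 + u 0) mod int n = 0" and cm: "(u (m+1) - a m) mod int n = 0"
    and sm: "(\<Sum>i\<le>m. a i) = int 0"
  have a0: "\<forall>i\<le>m. a i = 0" using sum_nonneg_eq_0_iff[of "{..m}" a] an sm by auto
  have u0: "u = (\<lambda>_. 0)"
  proof
    fix i
    show "u i = 0"
    proof (cases "i = 0")
      case True
      then show ?thesis using c0 a0 zu by (auto simp: zvert_def)
    next
      case F1: False
      show ?thesis
      proof (cases "i = m+1")
        case True
        then show ?thesis using cm a0 zu by (auto simp: zvert_def)
      next
        case False
        show ?thesis
        proof (cases "i \<le> m")
          case True
          then show ?thesis using eqs[rule_format, of i] a0 F1 by auto
        next
          case False
          then show ?thesis using zu \<open>i \<noteq> m+1\<close> by (auto simp: zvert_def)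
        qed
      qed
    qed
  qed
  show "\<exists>Q. zpath_to0 n m u Q \<and> length Q = 0 + 1 \<and> \<not> has_rshift_at n m Q m"
  proof -
    have "zvert n m (\<lambda>_. 0)" using zu u0 by simp
    then show ?thesis by (intro exI[of _ "[u]"]) (simp add: zpath_to0_def zpath_def u0 has_rshift_at_def)
  qed
next
  case (Suc N)
  fix u :: "nat \<Rightarrow> int" and a :: "nat \<Rightarrow> int"
  assume zu: "zvert n m u" and an: "\<forall>i\<le>m. 0 \<le> a i"
    and eqs: "\<forall>i. 1 \<le> i \<and> i \<le> m \<longrightarrow> a i - a (i-1) = - u i"
    and c0: "(a 0 + u 0) mod int n = 0" and cm: "(u (m+1) - a m) mod int n = 0"
    and sm: "(\<Sum>i\<le>m. a i) = int (Suc N)"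
  have fin: "finite (a ` {..m})" "a ` {..m} \<noteq> {}" by auto
  have "Max (a ` {..m}) \<in> a ` {..m}" using Max_in[OF fin] .
  then obtain i0 where i0: "i0 \<le> m" "a i0 = Max (a ` {..m})" by (metis atMost_iff imageE)
  have mx: "\<forall>i\<le>m. a i \<le> a i0" using i0 fin by auto
  have pos: "a i0 > 0"
  proof (rule ccontr)
    assume "\<not> a i0 > 0"
    then have "\<forall>i\<le>m. a i = 0" using mx an by force
    then show False using sm by simp
  qed
  define u' where "u' = u(i0 := coord_norm n m i0 (u i0 + 1), Suc i0 := coord_norm n m (Suc i0) (u (Suc i0) - 1))"
  define a' where "a' = a(i0 := a i0 - 1)"
  have l: "lshift n m i0 u u'" unfolding lshift_def u'_def using i0 by simp
  have zu': "zvert n m u'"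
  proof -
    have z1: "\<forall>i. i > m + 1 \<longrightarrow> u' i = 0" using zu i0 by (auto simp: u'_def zvert_def)
    have z2: "0 \<le> u' 0 \<and> u' 0 < int n \<and> 0 \<le> u' (m+1) \<and> u' (m+1) < int n"
      using zu i0 assms(1) by (auto simp: u'_def zvert_def coord_norm_def)
    have z3: "\<forall>i\<in>{1..m}. u' i \<in> {-1, 0, 1}"
    proof
      fix i assume h: "i \<in> {1..m}"
      show "u' i \<in> {-1, 0, 1}"
      proof (cases "i = i0")
        case True
        have "u i \<noteq> 1"
        proof
          assume "u i = 1"
          then have "a (i-1) = a i0 + 1" using eqs[rule_format, of i] h True by auto
          then show False using mx h by (metis diff_le_self dual_order.trans atLeastAtMost_iff less_add_one not_le)
        qed
        moreover have "u i \<in> {-1,0,1}" using zu h by (auto simp: zvert_def)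
        ultimately show ?thesis using True h by (auto simp: u'_def coord_norm_def)
      next
        case F: False
        show ?thesis
        proof (cases "i = Suc i0")
          case True
          have "u i \<noteq> -1"
          proof
            assume "u i = -1"
            then have "a i = a i0 + 1" using eqs[rule_format, of i] h True by auto
            then show False using mx h by (metis atLeastAtMost_iff less_add_one not_le)
          qed
          moreover have "u i \<in> {-1,0,1}" using zu h by (auto simp: zvert_def)
          ultimately show ?thesis using True h by (auto simp: u'_def coord_norm_def)
        next
          case False
          then show ?thesis using F zu h by (auto simp: u'_def zvert_def)
        qed
      qed
    qed
    obtain k1 where k1: "coord_norm n m i0 (u i0 + 1) = u i0 + 1 + int n * k1" using coord_norm_ex by blast
    obtain k2 where k2: "coord_norm n m (Suc i0) (u (Suc i0) - 1) = u (Suc i0) - 1 + int n * k2" using coord_norm_ex by blast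
    have "(\<Sum>i\<le>m+1. u' i) = (\<Sum>i\<le>m+1. u i) + (u' i0 - u i0) + (u' (Suc i0) - u (Suc i0))"
      by (rule sum_two) (use i0 in \<open>auto simp: u'_def\<close>)
    also have "\<dots> = (\<Sum>i\<le>m+1. u i) + int n * (k1 + k2)" using k1 k2 by (simp add: u'_def algebra_simps)
    finally have "(\<Sum>i\<le>m+1. u' i) mod int n = (\<Sum>i\<le>m+1. u i) mod int n" by simp
    then have z4: "(\<Sum>i\<le>m+1. u' i) mod int n = 0" using zu by (simp add: zvert_def)
    show ?thesis unfolding zvert_def using z1 z2 z3 z4 by blast
  qed
  have an': "\<forall>i\<le>m. 0 \<le> a' i" using an pos by (auto simp: a'_def)
  have eqs': "\<forall>i. 1 \<le> i \<and> i \<le> m \<longrightarrow> a' i - a' (i-1) = - u' i"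
  proof (intro allI impI)
    fix i assume h: "1 \<le> i \<and> i \<le> m"
    have "u' i = u i + (if i = i0 then 1 else 0) - (if i = Suc i0 then 1 else 0)"
      using inner_change[OF l] h by blast
    moreover have "(i - 1 = i0) = (i = Suc i0)" using h by auto
    ultimately show "a' i - a' (i-1) = - u' i" using eqs[rule_format, of i] h
      by (auto simp: a'_def split: if_splits)
  qed
  have c0': "(a' 0 + u' 0) mod int n = 0"
  proof (cases "i0 = 0")
    case True
    have "(a' 0 + u' 0) mod int n = (a 0 - 1 + (u 0 + 1) mod int n) mod int n"
      using True by (simp add: a'_def u'_def coord_norm_def)
    also have "\<dots> = (a 0 - 1 + (u 0 + 1)) mod int n" by (simp add: mod_add_right_eq)
    also have "\<dots> = 0" using c0 by simp
    finally show ?thesis .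
  next
    case False
    then show ?thesis using c0 by (simp add: a'_def u'_def)
  qed
  have cm': "(u' (m+1) - a' m) mod int n = 0"
  proof (cases "i0 = m")
    case True
    have "(u' (m+1) - a' m) mod int n = ((u (m+1) - 1) mod int n - (a m - 1)) mod int n"
      using True by (simp add: a'_def u'_def coord_norm_def)
    also have "\<dots> = ((u (m+1) - 1) - (a m - 1)) mod int n" by (simp add: mod_diff_left_eq)
    also have "\<dots> = 0" using cm by simp
    finally show ?thesis .
  next
    case False
    then show ?thesis using cm i0 by (simp add: a'_def u'_def)
  qed
  have sm': "(\<Sum>i\<le>m. a' i) = int N"
  proof -
    have "(\<Sum>i\<le>m. a' i) = (\<Sum>i\<le>m. a i) + (a' i0 - a i0)"
      by (rule sum_one) (use i0 in \<open>auto simp: a'_def\<close>)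
    then show ?thesis using sm by (simp add: a'_def)
  qed
  obtain Q' where Q': "zpath_to0 n m u' Q'" "length Q' = N + 1" "\<not> has_rshift_at n m Q' m"
    using Suc.IH[OF zu' an' eqs' c0' cm' sm'] by blast
  have Qne: "Q' \<noteq> []" and hQ: "hd Q' = u'" using Q'(1) by (auto simp: zpath_to0_def zpath_def)
  have nr: "\<not> rshift n m m u u'" using lshift_not_rshift_m[OF l zu assms] .
  have "zpath_to0 n m u (u # Q')"
    using Q'(1) Qne hQ zu zu' l unfolding zpath_to0_def zpath_steps
    by (auto simp: steps_ok_Cons zadj_def)
  moreover have "\<not> has_rshift_at n m (u # Q') m"
    using Q'(3) Qne hQ nr unfolding has_rshift_steps by (simp add: steps_ok_Cons)
  ultimately show "\<exists>Q. zpath_to0 n m u Q \<and> length Q = Suc N + 1 \<and> \<not> has_rshift_at n m Q m"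
    using Q'(2) by (intro exI[of _ "u # Q'"]) simp
qed

lemma part1:
  assumes n1: "n > 1" and m1: "m \<ge> 1" and pv: "pivot_path n m v P"
    and pI: "P_interval n m P p1 (int m + 1)"
    and sl: "shifts_left_in n m P (p1+1) (int m + 1)"
    and sums: "\<forall>j::nat. p1 + 1 \<le> int j \<and> int j \<le> int m + 1 \<longrightarrow> (\<Sum>i=j..m+1. v i) \<ge> 0"
    and k: "k + 1 < length P" "lshift n m m (P!k) (P!(k+1))" "(P!k) (m+1) = 0"
  shows False
proof -
  obtain p where p: "-1 \<le> p" "p \<le> int m + 1" "p_pivot_path n m p v P" using pv by (auto simp: pivot_path_def)
  have zp: "zpath_to0 n m v P" and wall: "is_wall n m P p"
    and minl: "\<And>Q. zpath_to0 n m v Q \<Longrightarrow> is_wall n m Q p \<Longrightarrow> length P \<le> length Q"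
    using p(3) by (auto simp: p_pivot_path_def)
  have W: "wr n m P > 0" using wr_pos k by blast
  have Pne: "P \<noteq> []" and hP: "hd P = v" and lP: "last P = (\<lambda>_. 0)"
    and zall: "\<forall>x\<in>set P. zvert n m x"
    and stz: "\<forall>k. k+1 < length P \<longrightarrow> zadj n m (P!k) (P!(k+1))"
    using zp by (auto simp: zpath_to0_def zpath_def)
  have zv: "zvert n m v" using zall hP Pne hd_in_set by blast
  have nor: "\<And>k j. k+1 < length P \<Longrightarrow> p1 + 1 \<le> int j \<Longrightarrow> j \<le> m \<Longrightarrow> \<not> rshift n m j (P!k) (P!(k+1))"
    using sl unfolding shifts_left_in_def by force
  have pI1: "-1 \<le> p1" "p1 < int m + 1" "p1 = -1 \<or> inner_wall n m P p1"
    and pI2: "\<And>q. p1 < q \<Longrightarrow> q < int m + 1 \<Longrightarrow> \<not> inner_wall n m P q"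
    using pI by (auto simp: P_interval_def)
  show False
  proof (cases "p1 = -1")
    case False
    then have iw: "inner_wall n m P p1" using pI1 by simp
    then have p10: "0 \<le> p1" "p1 \<le> int m" and nl: "\<not> has_lshift_at n m P (nat p1)"
      and nr: "\<not> has_rshift_at n m P (nat p1)" by (auto simp: inner_wall_def)
    define j where "j = nat p1 + 1"
    have j1: "1 \<le> j" "j \<le> m+1" "int j = p1 + 1" "j - 1 = nat p1" using p10 by (auto simp: j_def)
    have "steps_ok (\<lambda>x y. zadj n m x y \<and> \<not> lshift n m (j-1) x y \<and> \<not> rshift n m (j-1) x y
             \<and> (\<forall>i. j \<le> i \<longrightarrow> \<not> rshift n m i x y)) P"
      unfolding steps_ok_nth
    proof (intro allI impI)
      fix kk assume h: "kk + 1 < length P"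
      have r4: "\<forall>i. j \<le> i \<longrightarrow> \<not> rshift n m i (P!kk) (P!(kk+1))"
      proof (intro allI impI)
        fix i assume ji: "j \<le> i"
        show "\<not> rshift n m i (P!kk) (P!(kk+1))"
        proof (cases "i \<le> m")
          case True
          then show ?thesis using nor[OF h, of i] ji j1(3) by simp
        next
          case False
          then show ?thesis by (simp add: rshift_def)
        qed
      qed
      have "zadj n m (P!kk) (P!(kk+1))" using stz h by blast
      moreover have "\<not> lshift n m (j-1) (P!kk) (P!(kk+1))" using nl h j1(4) by (auto simp: has_lshift_at_def)
      moreover have "\<not> rshift n m (j-1) (P!kk) (P!(kk+1))" using nr h j1(4) by (auto simp: has_rshift_at_def)
      ultimately show "zadj n m (P!kk) (P!(kk+1)) \<and> \<not> lshift n m (j-1) (P!kk) (P!(kk+1)) \<and> \<not> rshift n m (j-1) (P!kk) (P!(kk+1))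
             \<and> (\<forall>i. j \<le> i \<longrightarrow> \<not> rshift n m i (P!kk) (P!(kk+1)))" using r4 by blast
    qed
    from easy[OF this Pne lP j1(1,2) n1]
    have e: "(\<Sum>t=j..m+1. v t) + int n * int (wr n m P) = 0" using hP by simp
    have "(\<Sum>t=j..m+1. v t) \<ge> 0" using sums j1 by simp
    moreover have "int n * int (wr n m P) > 0" using W n1 by simp
    ultimately show False using e by linarith
  next
    case True
    have lst: "steps_ok (lstep n m) P" unfolding steps_ok_nth
    proof (intro allI impI)
      fix kk assume h: "kk + 1 < length P"
      have za: "zadj n m (P!kk) (P!(kk+1))" using stz h by blast
      then obtain i where i: "lshift n m i (P!kk) (P!(kk+1)) \<or> rshift n m i (P!kk) (P!(kk+1))"
        by (auto simp: zadj_def)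
      have "\<not> rshift n m i (P!kk) (P!(kk+1))"
      proof
        assume r: "rshift n m i (P!kk) (P!(kk+1))"
        then have "i \<le> m" by (simp add: rshift_def)
        then show False using nor[OF h, of i] r True by simp
      qed
      then have "lshift n m i (P!kk) (P!(kk+1))" using i by blast
      then show "lstep n m (P!kk) (P!(kk+1))" using za by (auto simp: lstep_def zadj_def lshift_def)
    qed
    have pm: "p = int m + 1"
    proof -
      have "\<not> inner_wall n m P p"
      proof
        assume "inner_wall n m P p"
        then show False using pI2[of p] True by (auto simp: inner_wall_def)
      qed
      moreover have "\<not> (p = -1 \<and> \<not> has_lshift_at n m P 0)"
      proof
        assume h: "p = -1 \<and> \<not> has_lshift_at n m P 0"
        have "\<not> has_rshift_at n m P 0" using nor True by (auto simp: has_rshift_at_def)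
        then have "inner_wall n m P 0" using h by (simp add: inner_wall_def)
        then show False using pI2[of 0] True by simp
      qed
      ultimately show ?thesis using wall by (auto simp: is_wall_def)
    qed
    have C: "(\<forall>i. 1 \<le> i \<and> i \<le> m \<longrightarrow> int (cnt n m i P) - int (cnt n m (i-1) P) = - v i)
      \<and> int (cnt n m m P) = v (m+1) + int n * int (wr n m P)
      \<and> (int (cnt n m 0 P) + v 0) mod int n = 0
      \<and> length P = (\<Sum>i\<le>m. cnt n m i P) + 1"
      using counting[OF lst Pne lP n1] hP by simp
    define c where "c i = int (cnt n m i P)" for i
    define Wi where "Wi = int (wr n m P)"
    have C1: "\<And>i. 1 \<le> i \<Longrightarrow> i \<le> m \<Longrightarrow> c i - c (i-1) = - v i" using C by (simp add: c_def)
    have C2: "c m = v (m+1) + int n * Wi" using C by (simp add: c_def Wi_def)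
    have C3: "(c 0 + v 0) mod int n = 0" using C by (simp add: c_def)
    have C4: "length P = (\<Sum>i\<le>m. cnt n m i P) + 1" using C by simp
    have cform: "c i = (\<Sum>t=Suc i..m+1. v t) + int n * Wi" if "i \<le> m" for i
      using that
    proof (induction i rule: inc_induct)
      case base
      then show ?case using C2 by simp
    next
      case (step i)
      have "c (Suc i) - c i = - v (Suc i)" using C1[of "Suc i"] step by simp
      moreover have "(\<Sum>t=Suc i..m+1. v t) = v (Suc i) + (\<Sum>t=Suc (Suc i)..m+1. v t)"
        using step by (subst sum.atLeast_Suc_atMost) auto
      ultimately show ?case using step.IH by simp
    qed
    define a where "a i = c i - int n" for i
    have W1: "Wi \<ge> 1" using W by (simp add: Wi_def)
    have an: "\<forall>i\<le>m. 0 \<le> a i"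
    proof (intro allI impI)
      fix i assume "i \<le> m"
      then have "(\<Sum>t=Suc i..m+1. v t) \<ge> 0" using sums True by simp
      moreover have "int n * Wi \<ge> int n" using W1 n1 by simp
      ultimately show "0 \<le> a i" using cform[OF \<open>i \<le> m\<close>] by (simp add: a_def)
    qed
    have aeq: "\<forall>i. 1 \<le> i \<and> i \<le> m \<longrightarrow> a i - a (i-1) = - v i" using C1 by (simp add: a_def)
    have a0: "(a 0 + v 0) mod int n = 0"
    proof -
      have "a 0 + v 0 = (c 0 + v 0) + (-1) * int n" by (simp add: a_def)
      then show ?thesis using C3 mod_mult_self1[of "c 0 + v 0" "-1" "int n"] by metis
    qed
    have am: "(v (m+1) - a m) mod int n = 0"
    proof -
      have "v (m+1) - a m = int n * (1 - Wi)" using C2 by (simp add: a_def algebra_simps)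
      then show ?thesis by simp
    qed
    have suma: "(\<Sum>i\<le>m. a i) = int (\<Sum>i\<le>m. cnt n m i P) - int n * int (m+1)"
      by (simp add: a_def c_def sum_subtractf of_nat_sum)
    have sa0: "(\<Sum>i\<le>m. a i) \<ge> 0" using an by (intro sum_nonneg) auto
    obtain Q where Q: "zpath_to0 n m v Q" "length Q = nat (\<Sum>i\<le>m. a i) + 1" "\<not> has_rshift_at n m Q m"
      using construct[OF n1 m1 zv an aeq a0 am, of "nat (\<Sum>i\<le>m. a i)"] sa0 by auto
    have "is_wall n m Q p" using Q(3) pm by (simp add: is_wall_def)
    then have "length P \<le> length Q" using minl Q(1) by blast
    moreover have "int (length Q) < int (length P)"
      using Q(2) C4 suma sa0 n1 by simp
    ultimately show False by simp
  qed
qed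

definition rf :: "nat \<Rightarrow> (nat\<Rightarrow>int) \<Rightarrow> (nat\<Rightarrow>int)" where
  "rf m u = (\<lambda>i. if i \<le> m+1 then u (m+1-i) else 0)"

lemma rf_sum: "j \<le> m+1 \<Longrightarrow> (\<Sum>i=j..m+1. rf m u i) = (\<Sum>i=0..m+1-j. u i)"
  by (rule sum.reindex_bij_witness[where i="\<lambda>t. m+1-t" and j="\<lambda>t. m+1-t"]) (auto simp: rf_def)

lemma rf_zvert: assumes zu: "zvert n m u" shows "zvert n m (rf m u)"
proof -
  have su: "(\<Sum>i\<le>m+1. rf m u i) = (\<Sum>i\<le>m+1. u i)"
    using rf_sum[of 0 m u] by (simp add: atMost_atLeast0)
  have z1: "\<forall>i. i > m + 1 \<longrightarrow> rf m u i = 0" by (simp add: rf_def)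
  have z2: "rf m u 0 = u (m+1)" "rf m u (m+1) = u 0" by (simp_all add: rf_def)
  have z3: "\<forall>i\<in>{1..m}. rf m u i \<in> {-1, 0, 1}"
  proof
    fix i assume h: "i \<in> {1..m}"
    then have "m + 1 - i \<in> {1..m}" "i \<le> m + 1" by auto
    then show "rf m u i \<in> {-1, 0, 1}" using zu unfolding zvert_def rf_def by simp
  qed
  show ?thesis using zu z1 z2 z3 su unfolding zvert_def by simp
qed

lemma rf_rf: "zvert n m u \<Longrightarrow> rf m (rf m u) = u"
  by (auto simp: rf_def zvert_def fun_eq_iff)

lemma coord_norm_refl: "i \<le> m + 1 \<Longrightarrow> coord_norm n m (m+1-i) z = coord_norm n m i z"
  by (auto simp: coord_norm_def)

lemma rf_l2r: assumes "lshift n m i x y" shows "rshift n m (m-i) (rf m x) (rf m y)"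
proof -
  note L = lshift_vals[OF assms]
  have a: "m + 1 - (m - i) = Suc i" "m + 1 - Suc (m - i) = i" "m - i \<le> Suc m" "Suc (m - i) \<le> Suc m" using L(1) by auto
  show ?thesis unfolding rshift_def
  proof (intro conjI allI impI)
    show "m - i \<le> m" by simp
  next
    fix j assume "j \<noteq> m - i \<and> j \<noteq> m - i + 1"
    then show "rf m y j = rf m x j" using L by (auto simp: rf_def)
  next
    have r: "rf m y (m - i) = y (Suc i)" "rf m x (m - i) = x (Suc i)"
      "rf m y (m - i + 1) = y i" "rf m x (m - i + 1) = x i" using a unfolding rf_def by auto
    have c: "coord_norm n m (m - i) = coord_norm n m (Suc i)" "coord_norm n m (m - i + 1) = coord_norm n m i"
      using L(1) by (auto simp: coord_norm_def fun_eq_iff)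
    show "rf m y (m - i) = coord_norm n m (m - i) (rf m x (m - i) - 1)"
      using L(4) r c by simp
    show "rf m y (m - i + 1) = coord_norm n m (m - i + 1) (rf m x (m - i + 1) + 1)"
      using L(3) r c by simp
  qed
qed

lemma rf_r2l: assumes "rshift n m i x y" shows "lshift n m (m-i) (rf m x) (rf m y)"
proof -
  note L = rshift_vals[OF assms]
  have a: "m + 1 - (m - i) = Suc i" "m + 1 - Suc (m - i) = i" "m - i \<le> Suc m" "Suc (m - i) \<le> Suc m" using L(1) by auto
  show ?thesis unfolding lshift_def
  proof (intro conjI allI impI)
    show "m - i \<le> m" by simp
  next
    fix j assume "j \<noteq> m - i \<and> j \<noteq> m - i + 1"
    then show "rf m y j = rf m x j" using L by (auto simp: rf_def)
  next
    have r: "rf m y (m - i) = y (Suc i)" "rf m x (m - i) = x (Suc i)"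
      "rf m y (m - i + 1) = y i" "rf m x (m - i + 1) = x i" using a unfolding rf_def by auto
    have c: "coord_norm n m (m - i) = coord_norm n m (Suc i)" "coord_norm n m (m - i + 1) = coord_norm n m i"
      using L(1) by (auto simp: coord_norm_def fun_eq_iff)
    show "rf m y (m - i) = coord_norm n m (m - i) (rf m x (m - i) + 1)"
      using L(4) r c by simp
    show "rf m y (m - i + 1) = coord_norm n m (m - i + 1) (rf m x (m - i + 1) - 1)"
      using L(3) r c by simp
  qed
qed

lemma rf_l_iff: "zvert n m x \<Longrightarrow> zvert n m y \<Longrightarrow> i \<le> m \<Longrightarrow>
   lshift n m i (rf m x) (rf m y) \<longleftrightarrow> rshift n m (m-i) x y"
  using rf_l2r[of n m i "rf m x" "rf m y"] rf_r2l[of n m "m-i" x y] rf_rf[of n m x] rf_rf[of n m y]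
  by auto

lemma rf_r_iff: "zvert n m x \<Longrightarrow> zvert n m y \<Longrightarrow> i \<le> m \<Longrightarrow>
   rshift n m i (rf m x) (rf m y) \<longleftrightarrow> lshift n m (m-i) x y"
  using rf_r2l[of n m i "rf m x" "rf m y"] rf_l2r[of n m "m-i" x y] rf_rf[of n m x] rf_rf[of n m y]
  by auto

lemma rf_zadj: "zadj n m x y \<Longrightarrow> zadj n m (rf m x) (rf m y)"
  unfolding zadj_def using rf_zvert rf_l2r rf_r2l by blast

lemma has_l_map: assumes "\<forall>x\<in>set Q. zvert n m x" "i \<le> m"
  shows "has_lshift_at n m (map (rf m) Q) i \<longleftrightarrow> has_rshift_at n m Q (m-i)"
proof -
  have "lshift n m i (rf m (Q!k)) (rf m (Q!(k+1))) \<longleftrightarrow> rshift n m (m-i) (Q!k) (Q!(k+1))" if "k+1 < length Q" for k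
    using rf_l_iff[of n m "Q!k" "Q!(k+1)" i] assms that by (simp add: nth_mem)
  then show ?thesis unfolding has_lshift_at_def has_rshift_at_def by auto
qed

lemma has_r_map: assumes "\<forall>x\<in>set Q. zvert n m x" "i \<le> m"
  shows "has_rshift_at n m (map (rf m) Q) i \<longleftrightarrow> has_lshift_at n m Q (m-i)"
proof -
  have "rshift n m i (rf m (Q!k)) (rf m (Q!(k+1))) \<longleftrightarrow> lshift n m (m-i) (Q!k) (Q!(k+1))" if "k+1 < length Q" for k
    using rf_r_iff[of n m "Q!k" "Q!(k+1)" i] assms that by (simp add: nth_mem)
  then show ?thesis unfolding has_lshift_at_def has_rshift_at_def by auto
qed

lemma iw_map: assumes "\<forall>x\<in>set Q. zvert n m x"
  shows "inner_wall n m (map (rf m) Q) q \<longleftrightarrow> inner_wall n m Q (int m - q)"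
proof (cases "0 \<le> q \<and> q \<le> int m")
  case True
  have e: "m - nat q = nat (int m - q)" using True by (simp add: nat_diff_distrib)
  have iq: "nat q \<le> m" using True by linarith
  have "inner_wall n m (map (rf m) Q) q \<longleftrightarrow> \<not> has_lshift_at n m (map (rf m) Q) (nat q) \<and> \<not> has_rshift_at n m (map (rf m) Q) (nat q)"
    using True by (simp add: inner_wall_def)
  also have "\<dots> \<longleftrightarrow> \<not> has_rshift_at n m Q (nat (int m - q)) \<and> \<not> has_lshift_at n m Q (nat (int m - q))"
    using has_l_map[OF assms iq] has_r_map[OF assms iq] e by simp
  also have "\<dots> \<longleftrightarrow> inner_wall n m Q (int m - q)" using True by (auto simp: inner_wall_def)
  finally show ?thesis .
next
  case False
  then show ?thesis unfolding inner_wall_def by auto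
qed

lemma wall_map: assumes "\<forall>x\<in>set Q. zvert n m x"
  shows "is_wall n m (map (rf m) Q) q \<longleftrightarrow> is_wall n m Q (int m - q)"
  unfolding is_wall_def using iw_map[OF assms, of q] has_l_map[OF assms, of 0] has_r_map[OF assms, of m]
  by auto

lemma zpath_map: assumes "zpath_to0 n m v Q" shows "zpath_to0 n m (rf m v) (map (rf m) Q)"
proof -
  have Q: "Q \<noteq> []" "\<forall>x\<in>set Q. zvert n m x" "\<forall>k. k+1 < length Q \<longrightarrow> zadj n m (Q!k) (Q!(k+1))"
     "hd Q = v" "last Q = (\<lambda>_. 0)" using assms by (auto simp: zpath_to0_def zpath_def)
  have "rf m (\<lambda>_. 0) = (\<lambda>_. 0)" by (simp add: rf_def fun_eq_iff)
  moreover have "\<forall>x\<in>set (map (rf m) Q). zvert n m x" using Q(2) rf_zvert by auto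
  moreover have "\<forall>k. k+1 < length (map (rf m) Q) \<longrightarrow> zadj n m (map (rf m) Q ! k) (map (rf m) Q ! (k+1))"
    using Q(3) rf_zadj by simp
  ultimately show ?thesis using Q(1,4,5) unfolding zpath_to0_def zpath_def by (simp add: hd_map last_map)
qed

lemma part2:
  assumes n1: "n > 1" and m1: "m \<ge> 1" and pv: "pivot_path n m v P"
    and pI: "P_interval n m P (-1) p2"
    and sr: "shifts_right_in n m P 0 p2"
    and sums: "\<forall>j::nat. int j \<le> p2 \<longrightarrow> (\<Sum>i=0..j. v i) \<ge> 0"
    and k: "k + 1 < length P" "rshift n m 0 (P!k) (P!(k+1))" "(P!k) 0 = 0"
  shows False
proof -
  obtain p where p: "-1 \<le> p" "p \<le> int m + 1" "p_pivot_path n m p v P" using pv by (auto simp: pivot_path_def)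
  have zp: "zpath_to0 n m v P" and wall: "is_wall n m P p"
    and minl: "\<And>Q. zpath_to0 n m v Q \<Longrightarrow> is_wall n m Q p \<Longrightarrow> length P \<le> length Q"
    using p(3) by (auto simp: p_pivot_path_def)
  have zall: "\<forall>x\<in>set P. zvert n m x" and Pne: "P \<noteq> []" and hP: "hd P = v"
    using zp by (auto simp: zpath_to0_def zpath_def)
  have zv: "zvert n m v" using zall hP Pne hd_in_set by blast
  define P' where "P' = map (rf m) P"
  have pv': "pivot_path n m (rf m v) P'"
    unfolding pivot_path_def
  proof (intro exI[of _ "int m - p"] conjI)
    show "-1 \<le> int m - p" "int m - p \<le> int m + 1" using p by auto
    show "p_pivot_path n m (int m - p) (rf m v) P'"
      unfolding p_pivot_path_def
    proof (intro conjI allI impI)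
      show "zpath_to0 n m (rf m v) P'" using zpath_map[OF zp] by (simp add: P'_def)
      show "is_wall n m P' (int m - p)" using wall_map[OF zall, of "int m - p"] wall by (simp add: P'_def)
      fix Q assume Q: "zpath_to0 n m (rf m v) Q \<and> is_wall n m Q (int m - p)"
      have zQ: "\<forall>x\<in>set Q. zvert n m x" using Q by (auto simp: zpath_to0_def zpath_def)
      have "zpath_to0 n m v (map (rf m) Q)" using zpath_map[of n m "rf m v" Q] Q rf_rf[OF zv] by simp
      moreover have "is_wall n m (map (rf m) Q) p" using wall_map[OF zQ, of p] Q by simp
      ultimately have "length P \<le> length (map (rf m) Q)" using minl by blast
      then show "length P' \<le> length Q" by (simp add: P'_def)
    qed
  qed
  have pI0: "-1 < p2" "p2 \<le> int m + 1" "p2 = int m + 1 \<or> inner_wall n m P p2"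
    "\<And>q. -1 < q \<Longrightarrow> q < p2 \<Longrightarrow> \<not> inner_wall n m P q"
    using pI by (auto simp: P_interval_def)
  have pI': "P_interval n m P' (int m - p2) (int m + 1)"
    unfolding P_interval_def
  proof (intro conjI allI impI)
    show "-1 \<le> int m - p2" "int m - p2 < int m + 1" using pI0 by auto
    show "int m + 1 \<le> int m + 1" by simp
    show "int m - p2 = -1 \<or> inner_wall n m P' (int m - p2)"
      using pI0(3) iw_map[OF zall, of "int m - p2"] by (auto simp: P'_def)
    show "int m + 1 = int m + 1 \<or> inner_wall n m P' (int m + 1)" by simp
    fix q assume "int m - p2 < q \<and> q < int m + 1"
    then show "\<not> inner_wall n m P' q" using pI0(4)[of "int m - q"] iw_map[OF zall, of q] by (simp add: P'_def)
  qed
  have sl': "shifts_left_in n m P' (int m - p2 + 1) (int m + 1)"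
    unfolding shifts_left_in_def
  proof (intro allI impI)
    fix kk j assume h: "kk + 1 < length P' \<and> int m - p2 + 1 \<le> int j \<and> int j + 1 \<le> int m + 1"
    have jm: "j \<le> m" using h by simp
    have z2: "zvert n m (P!kk)" "zvert n m (P!(kk+1))" using zall h by (auto simp: P'_def nth_mem)
    have "\<not> lshift n m (m-j) (P!kk) (P!(kk+1))"
      using sr h jm unfolding shifts_right_in_def P'_def by auto
    then show "\<not> rshift n m j (P'!kk) (P'!(kk+1))"
      using rf_r_iff[OF z2 jm] h by (simp add: P'_def)
  qed
  have sums': "\<forall>j::nat. int m - p2 + 1 \<le> int j \<and> int j \<le> int m + 1 \<longrightarrow> (\<Sum>i=j..m+1. rf m v i) \<ge> 0"
  proof (intro allI impI)
    fix j :: nat assume h: "int m - p2 + 1 \<le> int j \<and> int j \<le> int m + 1"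
    have "(\<Sum>i=j..m+1. rf m v i) = (\<Sum>i=0..m+1-j. v i)" using h by (intro rf_sum) simp
    moreover have "int (m+1-j) \<le> p2" using h by simp
    ultimately show "(\<Sum>i=j..m+1. rf m v i) \<ge> 0" using sums by simp
  qed
  have k': "k + 1 < length P'" "lshift n m m (P'!k) (P'!(k+1))" "(P'!k) (m+1) = 0"
    using k rf_r2l[OF k(2)] by (auto simp: P'_def rf_def)
  show False using part1[OF n1 m1 pv' _ _ sums' k'] pI' sl' by simp
qed

theorem lemma5p14:
  fixes n m :: nat and v :: "nat \<Rightarrow> int" and P :: "(nat \<Rightarrow> int) list" and p1 p2 :: int
  assumes "n > 1" and "m \<ge> 1"
    and "pivot_path n m v P"
    and "P_interval n m P p1 p2"
  shows "(p2 = int m + 1 \<and> shifts_left_in n m P (p1 + 1) p2 \<and>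
           (\<forall>j::nat. p1 + 1 \<le> int j \<and> int j \<le> p2 \<longrightarrow> (\<Sum>i=j..m+1. v i) \<ge> 0)
         \<longrightarrow> \<not> (\<exists>k. k + 1 < length P \<and> lshift n m m (P!k) (P!(k+1)) \<and> (P!k) (m+1) = 0))
       \<and> (p1 = -1 \<and> shifts_right_in n m P (p1 + 1) p2 \<and>
           (\<forall>j::nat. p1 + 1 \<le> int j \<and> int j \<le> p2 \<longrightarrow> (\<Sum>i=0..j. v i) \<ge> 0)
         \<longrightarrow> \<not> (\<exists>k. k + 1 < length P \<and> rshift n m 0 (P!k) (P!(k+1)) \<and> (P!k) 0 = 0))"
proof (intro conjI impI notI)
  assume h: "p2 = int m + 1 \<and> shifts_left_in n m P (p1 + 1) p2 \<and>
           (\<forall>j::nat. p1 + 1 \<le> int j \<and> int j \<le> p2 \<longrightarrow> (\<Sum>i=j..m+1. v i) \<ge> 0)"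
    and "\<exists>k. k + 1 < length P \<and> lshift n m m (P!k) (P!(k+1)) \<and> (P!k) (m+1) = 0"
  then obtain k where k: "k + 1 < length P" "lshift n m m (P!k) (P!(k+1))" "(P!k) (m+1) = 0" by blast
  from h have e: "p2 = int m + 1" and s2: "shifts_left_in n m P (p1 + 1) p2"
    and s3: "\<forall>j::nat. p1 + 1 \<le> int j \<and> int j \<le> p2 \<longrightarrow> (\<Sum>i=j..m+1. v i) \<ge> 0" by blast+
  have a1: "P_interval n m P p1 (int m + 1)" using assms(4) e by simp
  have a2: "shifts_left_in n m P (p1+1) (int m + 1)" using s2 e by simp
  have a3: "\<forall>j::nat. p1 + 1 \<le> int j \<and> int j \<le> int m + 1 \<longrightarrow> (\<Sum>i=j..m+1. v i) \<ge> 0" using s3 e by simp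
  show False by (rule part1[OF assms(1,2,3) a1 a2 a3 k])
next
  assume h: "p1 = -1 \<and> shifts_right_in n m P (p1 + 1) p2 \<and>
           (\<forall>j::nat. p1 + 1 \<le> int j \<and> int j \<le> p2 \<longrightarrow> (\<Sum>i=0..j. v i) \<ge> 0)"
    and "\<exists>k. k + 1 < length P \<and> rshift n m 0 (P!k) (P!(k+1)) \<and> (P!k) 0 = 0"
  then obtain k where k: "k + 1 < length P" "rshift n m 0 (P!k) (P!(k+1))" "(P!k) 0 = 0" by blast
  from h have e: "p1 = -1" and s2: "shifts_right_in n m P (p1 + 1) p2"
    and s3: "\<forall>j::nat. p1 + 1 \<le> int j \<and> int j \<le> p2 \<longrightarrow> (\<Sum>i=0..j. v i) \<ge> 0" by blast+
  have a1: "P_interval n m P (-1) p2" using assms(4) e by simp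
  have a2: "shifts_right_in n m P 0 p2" using s2 e by simp
  have a3: "\<forall>j::nat. int j \<le> p2 \<longrightarrow> (\<Sum>i=0..j. v i) \<ge> 0" using s3 e by simp
  show False by (rule part2[OF assms(1,2,3) a1 a2 a3 k])
qed

end
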